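(* Let $0<\alpha<1/2$, let $M>0$ and let $k:=\prod_{p\le M}p$ (product over primes). For every positive divisor $c$ of $k$, \[ \frac{1}{k^2}\sum_{d\mid k}(c,d)^{2\alpha}\Bigl(\phi\bigl(\tfrac kc\bigr)\phi\bigl(\tfrac kd\bigr)\Bigr)^{\alpha}\bigl(\phi(c)\phi(d)\bigr)^{1-\alpha}=\prod_{p\mid k}\Bigl(\frac1p\Bigl(1-\frac1p\Bigr)+\Bigl(1-\frac1p\Bigr)^{2-2\alpha}\Bigr)\frac{c}{k}\,f\Bigl(\frac kc\Bigr). \] Moreover, \[ \frac{1}{k^2}\sum_{c,d\mid k}(c,d)^{2\alpha}\Bigl(\phi\bigl(\tfrac kc\bigr)\phi\bigl(\tfrac kd\bigr)\Bigr)^{\alpha}\bigl(\phi(c)\phi(d)\bigr)^{1-\alpha}=\prod_{p\mid k}\Bigl(p^{2\alpha-2}\Bigl(1-\frac1p\Bigr)^{2\alpha}+\frac2p\Bigl(1-\frac1p\Bigr)+\Bigl(1-\frac1p\Bigr)^{2-2\alpha}\Bigr). \]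
   Context: $\phi$ is Euler's totient function, $(c,d)$ is the greatest common divisor, sums over $d\mid k$ run over positive divisors, and products over $p$ run over primes. The multiplicative function $f$ is defined by \[ f(n):=\prod_{p\mid n}\frac{p^{2\alpha-1}\bigl(1-\frac1p\bigr)^{2\alpha}+\bigl(1-\frac1p\bigr)}{\frac1p\bigl(1-\frac1p\bigr)+\bigl(1-\frac1p\bigr)^{2-2\alpha}}. \] *)

theory Defs
  imports Complex_Main "HOL-Number_Theory.Number_Theory"
begin

definition f_fun :: "real \<Rightarrow> nat \<Rightarrow> real" where
  "f_fun \<alpha> n = (\<Prod>p\<in>prime_factors n.
      (real p powr (2*\<alpha>-1) * (1 - 1/real p) powr (2*\<alpha>) + (1 - 1/real p)) /
      ((1/real p) * (1 - 1/real p) + (1 - 1/real p) powr (2 - 2*\<alpha>)))"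

end

theory Submission
  imports Defs "HOL-Computational_Algebra.Squarefree"
begin


lemma pf_prod:
  assumes "finite S" "\<forall>p\<in>S. prime (p::nat)"
  shows "prime_factors (\<Prod>S) = S"
proof -
  have "0 \<notin> id ` S" using assms by auto
  then have "prime_factors (prod id S) = \<Union>((prime_factors \<circ> id) ` S)"
    using prime_factors_prod[OF assms(1)] by blast
  also have "\<dots> = S" using assms by (auto simp: prime_prime_factors)
  finally show ?thesis by simp
qed

lemma prime_notdvd_prod:
  assumes "finite S" "\<forall>q\<in>S. prime (q::nat)" "prime p" "p \<notin> S"
  shows "\<not> p dvd \<Prod>S"
proof
  assume "p dvd \<Prod>S"
  then obtain q where "q \<in> S" "p dvd q" using assms prime_dvd_prod_iff[of S p id] by auto
  then show False using assms primes_dvd_imp_eq by metis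
qed

lemma gcd_prod:
  assumes "finite T" "finite S" "\<forall>p\<in>T \<union> S. prime (p::nat)"
  shows "gcd (\<Prod>T) (\<Prod>S) = \<Prod>(T \<inter> S)"
  using assms
proof (induction T arbitrary: S rule: finite_induct)
  case empty then show ?case by simp
next
  case (insert p T)
  show ?case
  proof (cases "p \<in> S")
    case True
    have S: "\<Prod>S = p * \<Prod>(S - {p})" using True insert.prems
      by (metis prod.remove)
    have "gcd (\<Prod>(insert p T)) (\<Prod>S) = p * gcd (\<Prod>T) (\<Prod>(S-{p}))"
      using insert.hyps S by (simp add: gcd_mult_left)
    also have "gcd (\<Prod>T) (\<Prod>(S-{p})) = \<Prod>(T \<inter> (S - {p}))"
      using insert by auto
    also have "T \<inter> (S - {p}) = T \<inter> S" using insert.hyps by auto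
    also have "p * \<Prod>(T \<inter> S) = \<Prod>(insert p T \<inter> S)"
      using True insert.hyps by (simp add: Int_insert_left)
    finally show ?thesis .
  next
    case False
    have "coprime p (\<Prod>S)"
      using prime_notdvd_prod[of S p] False insert.prems
      by (simp add: prime_imp_coprime)
    then have "gcd (p * \<Prod>T) (\<Prod>S) = gcd (\<Prod>T) (\<Prod>S)"
      by (metis coprime_commute gcd.commute gcd_mult_right_left_cancel)
    then show ?thesis using insert False by (simp add: Int_insert_left)
  qed
qed

lemma totient_prod_primes:
  assumes "finite S" "\<forall>p\<in>S. prime (p::nat)"
  shows "totient (\<Prod>S) = (\<Prod>p\<in>S. p - 1)"
proof -
  have "pairwise coprime (id ` S)" using assms
    by (auto simp: pairwise_def primes_coprime)
  then have "totient (prod id S) = (\<Prod>a\<in>S. totient (id a))"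
    by (intro totient_prod_coprime) auto
  then show ?thesis using assms by (simp add: totient_prime)
qed

lemma sum_pow_prod:
  fixes h :: "'a \<Rightarrow> bool \<Rightarrow> real"
  assumes "finite P"
  shows "(\<Sum>X\<in>Pow P. \<Prod>p\<in>P. h p (p \<in> X)) = (\<Prod>p\<in>P. h p True + h p False)"
proof -
  have "(\<Prod>p\<in>P. h p True + h p False) = (\<Sum>X\<in>Pow P. (\<Prod>p\<in>X. h p True) * (\<Prod>p\<in>P-X. h p False))"
    by (rule prod_add[OF assms])
  also have "\<dots> = (\<Sum>X\<in>Pow P. \<Prod>p\<in>P. h p (p \<in> X))"
  proof (rule sum.cong[OF refl])
    fix X assume X: "X \<in> Pow P"
    have "(\<Prod>p\<in>P. h p (p \<in> X)) = (\<Prod>p\<in>P-X. h p (p \<in> X)) * (\<Prod>p\<in>X. h p (p \<in> X))"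
      using X assms by (intro prod.subset_diff) auto
    also have "(\<Prod>p\<in>P-X. h p (p \<in> X)) = (\<Prod>p\<in>P-X. h p False)" by (rule prod.cong) auto
    also have "(\<Prod>p\<in>X. h p (p \<in> X)) = (\<Prod>p\<in>X. h p True)" by (rule prod.cong) auto
    finally show "(\<Prod>p\<in>X. h p True) * (\<Prod>p\<in>P-X. h p False) = (\<Prod>p\<in>P. h p (p \<in> X))" by simp
  qed
  finally show ?thesis by simp
qed

lemma prod_restrict:
  assumes "finite P" "X \<subseteq> P"
  shows "(\<Prod>p\<in>X. h p) = (\<Prod>p\<in>P. if p \<in> X then h p else (1::real))"
  using prod.inter_restrict[OF assms(1), of h X] assms by (simp add: Int_absorb1)



definition gl :: "real \<Rightarrow> nat \<Rightarrow> bool \<Rightarrow> bool \<Rightarrow> real" where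
"gl a p t s = (if t \<and> s then real p powr (2*a) else 1) *
   ((if t then 1 else real p - 1) * (if s then 1 else real p - 1)) powr a *
   ((if t then real p - 1 else 1) * (if s then real p - 1 else 1)) powr (1 - a)"

lemma gl_vals:
  "gl a p True True = real p powr (2*a) * ((real p - 1)*(real p - 1)) powr (1-a)"
  "gl a p True False = (real p - 1) powr a * (real p - 1) powr (1-a)"
  "gl a p False True = (real p - 1) powr a * (real p - 1) powr (1-a)"
  "gl a p False False = ((real p - 1)*(real p - 1)) powr a"
  by (simp_all add: gl_def)

lemma loc:
  fixes a x :: real assumes x1: "x > 1"
  defines "D \<equiv> (1/x) * (1 - 1/x) + (1 - 1/x) powr (2 - 2*a)"
  defines "N \<equiv> x powr (2*a-1) * (1 - 1/x) powr (2*a) + (1 - 1/x)"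
  defines "TT \<equiv> x powr (2*a) * ((x - 1)*(x - 1)) powr (1-a)"
  defines "TF \<equiv> (x - 1) powr a * (x - 1) powr (1-a)"
  defines "FF \<equiv> ((x - 1)*(x - 1)) powr a"
  shows "(TT + TF) / x^2 = D"
    "(TF + FF) / x^2 = (1/x) * N"
    "D \<noteq> 0"
    "(TT + TF + (TF + FF)) / x^2
      = x powr (2*a - 2) * (1 - 1/x) powr (2*a) + (2/x) * (1 - 1/x) + (1 - 1/x) powr (2 - 2*a)"
proof -
  define y where "y = x - 1"
  have y0: "y > 0" using x1 y_def by simp
  define u where "u = x powr a"
  define v where "v = y powr a"
  have u0: "u > 0" and v0: "v > 0" using x1 y0 u_def v_def by auto
  have e1: "1 - 1/x = y/x" using x1 y_def by (simp add: field_simps)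
  have x2a: "x powr (2*a) = u^2" unfolding u_def
    by (simp only: mult_2 powr_add power2_eq_square)
  have y2a: "y powr (2*a) = v^2" unfolding v_def
    by (simp only: mult_2 powr_add power2_eq_square)
  have y1a: "y powr (1 - a) = y / v" unfolding v_def using y0 by (simp add: powr_diff)
  have x1a: "x powr (1 - a) = x / u" unfolding u_def using x1 by (simp add: powr_diff)
  have y22a: "y powr (2 - 2*a) = (y/v)^2"
  proof -
    have "y powr (2 - 2*a) = y powr ((1-a)+(1-a))" by (simp add: algebra_simps)
    also have "\<dots> = (y/v)^2" by (simp only: powr_add y1a power2_eq_square)
    finally show ?thesis .
  qed
  have x22a: "x powr (2 - 2*a) = (x/u)^2"
  proof -
    have "x powr (2 - 2*a) = x powr ((1-a)+(1-a))" by (simp add: algebra_simps)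
    also have "\<dots> = (x/u)^2" by (simp only: powr_add x1a power2_eq_square)
    finally show ?thesis .
  qed
  have x2a1: "x powr (2*a - 1) = u^2 / x" using x1 x2a by (simp add: powr_diff)
  have x2a2: "x powr (2*a - 2) = u^2 / x^2"
  proof -
    have "x powr (2*a - 2) = x powr (2*a) / x powr 2" using x1 by (simp add: powr_diff)
    also have "x powr 2 = x^2" using x1 by (simp add: powr_numeral)
    finally show ?thesis using x2a by simp
  qed
  have qa: "(y/x) powr (2*a) = v^2/u^2" using x1 y0 x2a y2a by (simp add: powr_divide)
  have qb: "(y/x) powr (2 - 2*a) = (y/v)^2 / (x/u)^2" using x1 y0 x22a y22a by (simp add: powr_divide)
  have gTT: "TT = u^2 * (y/v)^2"
  proof -
    have "(y*y) powr (1-a) = (y/v)^2" using y0 y1a by (simp add: powr_mult power2_eq_square)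
    then show ?thesis unfolding TT_def y_def[symmetric] x2a by simp
  qed
  have gTF: "TF = y" unfolding TF_def y_def[symmetric] v_def[symmetric] y1a using v0 by simp
  have gFF: "FF = v^2"
    unfolding FF_def y_def[symmetric] using y0 v_def by (simp add: powr_mult power2_eq_square)
  show "(TT + TF) / x^2 = D"
    unfolding D_def e1 qb gTT gTF using u0 v0 y0 x1 by (simp add: field_simps) (simp add: eval_nat_numeral)
  show "(TF + FF) / x^2 = (1/x) * N"
    unfolding N_def e1 qa x2a1 gFF gTF using u0 v0 y0 x1 by (simp add: field_simps) (simp add: eval_nat_numeral)
  show "D \<noteq> 0" unfolding D_def e1 using x1 y0
    by (smt (verit) divide_pos_pos mult_pos_pos powr_gt_zero)
  show "(TT + TF + (TF + FF)) / x^2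
      = x powr (2*a - 2) * (1 - 1/x) powr (2*a) + (2/x) * (1 - 1/x) + (1 - 1/x) powr (2 - 2*a)"
    unfolding e1 qa qb x2a2 gFF gTF gTT using u0 v0 y0 x1 by (simp add: field_simps) (simp add: eval_nat_numeral)
qed


lemma divisor_form:
  assumes "finite P" "\<forall>p\<in>P. prime (p::nat)" "d dvd \<Prod>P"
  shows "d = \<Prod>(prime_factors d) \<and> prime_factors d \<subseteq> P"
proof -
  have k0: "\<Prod>P \<noteq> 0" using assms by (auto simp: prime_gt_0_nat)
  then have d0: "d \<noteq> 0" using assms(3) by auto
  have sqk: "squarefree (prod id P)"
    using assms by (intro squarefree_prod_coprime) (auto simp: primes_coprime squarefree_prime)
  have sqd: "squarefree d" using squarefree_mono[OF assms(3)] sqk by simp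
  have m1: "\<forall>p\<in>prime_factors d. multiplicity p d = 1"
    using sqd squarefree_factorial_semiring'[OF d0] by blast
  have "(\<Prod>p\<in>prime_factors d. p ^ multiplicity p d) = d"
    using prod_prime_factors[OF d0] by simp
  moreover have "(\<Prod>p\<in>prime_factors d. p ^ multiplicity p d) = \<Prod>(prime_factors d)"
    using m1 by (intro prod.cong) auto
  moreover have "prime_factors d \<subseteq> prime_factors (\<Prod>P)"
    using assms(3) k0 d0 by (auto simp: in_prime_factors_iff dvd_trans)
  ultimately show ?thesis using pf_prod[OF assms(1,2)] by auto
qed

lemma div_sum:
  assumes "finite P" "\<forall>p\<in>P. prime (p::nat)"
  shows "(\<Sum>d\<in>{d. d dvd \<Prod>P}. g d) = (\<Sum>S\<in>Pow P. (g (\<Prod>S) :: real))"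
proof -
  have inj: "inj_on (\<lambda>S. \<Prod>S) (Pow P)"
  proof (rule inj_onI)
    fix S S' assume "S \<in> Pow P" "S' \<in> Pow P" "\<Prod>S = \<Prod>S'"
    then show "S = S'" using pf_prod[of S] pf_prod[of S'] assms finite_subset by (metis PowD subsetD)
  qed
  have img: "{d. d dvd \<Prod>P} = (\<lambda>S. \<Prod>S) ` Pow P"
  proof
    show "{d. d dvd \<Prod>P} \<subseteq> (\<lambda>S. \<Prod>S) ` Pow P"
      using divisor_form[OF assms] by blast
    show "(\<lambda>S. \<Prod>S) ` Pow P \<subseteq> {d. d dvd \<Prod>P}"
    proof
      fix x assume "x \<in> (\<lambda>S. \<Prod>S) ` Pow P"
      then obtain S where S: "S \<subseteq> P" "x = \<Prod>S" by auto
      have "\<Prod>P = \<Prod>(P - S) * \<Prod>S" using S assms by (intro prod.subset_diff) auto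
      then show "x \<in> {d. d dvd \<Prod>P}" using S by auto
    qed
  qed
  show ?thesis unfolding img by (subst sum.reindex[OF inj]) simp
qed

lemma tot_real:
  assumes "finite P" "\<forall>p\<in>P. prime (p::nat)" "X \<subseteq> P"
  shows "real (totient (\<Prod>X)) = (\<Prod>p\<in>P. if p \<in> X then real p - 1 else 1)"
proof -
  have fX: "finite X" using assms finite_subset by auto
  have pX: "\<forall>p\<in>X. prime p" using assms by auto
  have "totient (\<Prod>X) = (\<Prod>p\<in>X. p - 1)" by (rule totient_prod_primes[OF fX pX])
  then have "real (totient (\<Prod>X)) = (\<Prod>p\<in>X. real (p - 1))"
    by (simp only: of_nat_prod)
  also have "\<dots> = (\<Prod>p\<in>X. real p - 1)"
  proof (rule prod.cong[OF refl])
    fix p assume "p \<in> X"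
    then have "1 \<le> p" using assms prime_ge_1_nat by auto
    then show "real (p - 1) = real p - 1" by (simp add: of_nat_diff)
  qed
  also have "\<dots> = (\<Prod>p\<in>P. if p \<in> X then real p - 1 else 1)"
    by (rule prod_restrict[OF assms(1,3)])
  finally show ?thesis .
qed

lemma term_prod:
  fixes a :: real
  assumes "finite P" "\<forall>p\<in>P. prime (p::nat)" "T \<subseteq> P" "S \<subseteq> P" "k = \<Prod>P"
  shows "real (gcd (\<Prod>T) (\<Prod>S)) powr (2*a) *
            (real (totient (k div \<Prod>T)) * real (totient (k div \<Prod>S))) powr a *
            (real (totient (\<Prod>T)) * real (totient (\<Prod>S))) powr (1 - a)
        = (\<Prod>p\<in>P. gl a p (p \<in> T) (p \<in> S))"
proof -
  have fT: "finite T" "finite S" using finite_subset[OF assms(3,1)] finite_subset[OF assms(4,1)] by auto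
  have kdiv: "k div \<Prod>X = \<Prod>(P - X)" if "X \<subseteq> P" for X
  proof -
    have "\<Prod>P = \<Prod>(P - X) * \<Prod>X" using that assms by (intro prod.subset_diff) auto
    moreover have "\<Prod>X > 0" using that assms fT finite_subset[OF that assms(1)]
      by (intro prod_pos) (auto simp: prime_gt_0_nat)
    ultimately show ?thesis using assms(5) by simp
  qed
  have g1: "real (gcd (\<Prod>T) (\<Prod>S)) powr (2*a) = (\<Prod>p\<in>P. if p \<in> T \<and> p \<in> S then real p powr (2*a) else 1)"
  proof -
    have "real (gcd (\<Prod>T) (\<Prod>S)) = (\<Prod>p\<in>T \<inter> S. real p)"
    proof -
      have "\<forall>x\<in>T \<union> S. prime x" using assms by auto
      then have "gcd (\<Prod>T) (\<Prod>S) = \<Prod>(T \<inter> S)" using gcd_prod[of T S] fT by auto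
      then show ?thesis by (simp only: of_nat_prod)
    qed
    then have "real (gcd (\<Prod>T) (\<Prod>S)) powr (2*a) = (\<Prod>p\<in>T \<inter> S. real p powr (2*a))"
      by (simp add: prod_powr_distrib)
    also have "\<dots> = (\<Prod>p\<in>P. if p \<in> T \<inter> S then real p powr (2*a) else 1)"
      using assms by (intro prod_restrict) auto
    finally show ?thesis by simp
  qed
  have t1: "real (totient (k div \<Prod>X)) = (\<Prod>p\<in>P. if p \<in> X then 1 else real p - 1)" if "X \<subseteq> P" for X
  proof -
    have "real (totient (k div \<Prod>X)) = (\<Prod>p\<in>P. if p \<in> P - X then real p - 1 else 1)"
      using kdiv[OF that] tot_real[OF assms(1,2), of "P - X"] by auto
    also have "\<dots> = (\<Prod>p\<in>P. if p \<in> X then 1 else real p - 1)"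
      by (intro prod.cong) auto
    finally show ?thesis .
  qed
  have t2: "real (totient (\<Prod>X)) = (\<Prod>p\<in>P. if p \<in> X then real p - 1 else 1)" if "X \<subseteq> P" for X
    using tot_real[OF assms(1,2) that] .
  show ?thesis
    unfolding g1 t1[OF assms(3)] t1[OF assms(4)] t2[OF assms(3)] t2[OF assms(4)]
      prod.distrib[symmetric] prod_powr_distrib
    by (intro prod.cong) (auto simp: gl_def)
qed

lemma inv_sq:
  assumes "finite P" "k = \<Prod>P"
  shows "1 / (real k)^2 = (\<Prod>p\<in>P. 1 / (real p)^2)"
proof -
  have "(\<Prod>p\<in>P. 1 / (real p)^2) = (\<Prod>p\<in>P. 1) / (\<Prod>p\<in>P. (real p)^2)"
    by (rule prod_dividef)
  also have "\<dots> = 1 / (real k)^2" unfolding assms(2) by (simp add: of_nat_prod prod_power_distrib)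
  finally show ?thesis by simp
qed



theorem lemma6:
  fixes \<alpha> M :: real and k c :: nat
  assumes "0 < \<alpha>" and "\<alpha> < 1/2" and "M > 0"
    and "k = (\<Prod>p\<in>{p::nat. prime p \<and> real p \<le> M}. p)"
    and "c dvd k" and "c > 0"
  shows "((1 / (real k)^2) * (\<Sum>d\<in>{d. d dvd k}.
            real (gcd c d) powr (2*\<alpha>) *
            (real (totient (k div c)) * real (totient (k div d))) powr \<alpha> *
            (real (totient c) * real (totient d)) powr (1 - \<alpha>))
         = (\<Prod>p\<in>prime_factors k. (1/real p) * (1 - 1/real p) + (1 - 1/real p) powr (2 - 2*\<alpha>))
           * (real c / real k) * f_fun \<alpha> (k div c))
    \<and> ((1 / (real k)^2) * (\<Sum>c'\<in>{c'. c' dvd k}. \<Sum>d\<in>{d. d dvd k}.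
            real (gcd c' d) powr (2*\<alpha>) *
            (real (totient (k div c')) * real (totient (k div d))) powr \<alpha> *
            (real (totient c') * real (totient d)) powr (1 - \<alpha>))
         = (\<Prod>p\<in>prime_factors k. real p powr (2*\<alpha> - 2) * (1 - 1/real p) powr (2*\<alpha>)
              + (2/real p) * (1 - 1/real p) + (1 - 1/real p) powr (2 - 2*\<alpha>)))"
proof -
  define P where "P = {p::nat. prime p \<and> real p \<le> M}"
  have "P \<subseteq> {..nat \<lceil>M\<rceil>}"
  proof
    fix p assume "p \<in> P"
    then have "real p \<le> M" by (simp add: P_def)
    then show "p \<in> {..nat \<lceil>M\<rceil>}" by (metis atMost_iff ceiling_mono ceiling_of_nat nat_int nat_mono)
  qed
  then have finP: "finite P" using finite_subset by blast
  have pr: "\<forall>p\<in>P. prime p" by (simp add: P_def)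
  have kP: "k = \<Prod>P" using assms(4) P_def by simp
  have pfk: "prime_factors k = P" using pf_prod[OF finP pr] kP by simp
  define T where "T = prime_factors c"
  have cT: "c = \<Prod>T" and TP: "T \<subseteq> P" using divisor_form[OF finP pr] assms(5) kP T_def by auto
  define G where "G = (\<lambda>c d. real (gcd c d) powr (2*\<alpha>) *
            (real (totient (k div c)) * real (totient (k div d))) powr \<alpha> *
            (real (totient c) * real (totient d)) powr (1 - \<alpha>))"
  have Gprod: "G (\<Prod>T') (\<Prod>S) = (\<Prod>p\<in>P. gl \<alpha> p (p \<in> T') (p \<in> S))" if "T' \<subseteq> P" "S \<subseteq> P" for T' S
    unfolding G_def using term_prod[OF finP pr that kP] .
  have sumd: "(\<Sum>d\<in>{d. d dvd k}. G (\<Prod>T') d) = (\<Prod>p\<in>P. gl \<alpha> p (p \<in> T') True + gl \<alpha> p (p \<in> T') False)"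
    if "T' \<subseteq> P" for T'
  proof -
    have "(\<Sum>d\<in>{d. d dvd k}. G (\<Prod>T') d) = (\<Sum>S\<in>Pow P. G (\<Prod>T') (\<Prod>S))"
      unfolding kP by (rule div_sum[OF finP pr])
    also have "\<dots> = (\<Sum>S\<in>Pow P. \<Prod>p\<in>P. gl \<alpha> p (p \<in> T') (p \<in> S))"
      using Gprod that by (intro sum.cong) auto
    also have "\<dots> = (\<Prod>p\<in>P. gl \<alpha> p (p \<in> T') True + gl \<alpha> p (p \<in> T') False)"
      by (rule sum_pow_prod[OF finP, of "\<lambda>p s. gl \<alpha> p (p \<in> T') s"])
    finally show ?thesis .
  qed
  have isq: "1 / (real k)^2 = (\<Prod>p\<in>P. 1 / (real p)^2)" by (rule inv_sq[OF finP kP])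
  have pgt: "real p > 1" if "p \<in> P" for p using pr that prime_gt_1_nat by fastforce
  have kc: "k div c = \<Prod>(P - T)"
  proof -
    have "\<Prod>P = \<Prod>(P - T) * \<Prod>T" using TP finP by (intro prod.subset_diff) auto
    then show ?thesis using kP cT assms(6) by simp
  qed
  have ck: "real c / real k = (\<Prod>p\<in>P. if p \<in> T then 1 else 1 / real p)"
  proof -
    have "real k = real c * real (\<Prod>(P - T))" using kc assms(5) by (metis dvd_mult_div_cancel of_nat_mult)
    then have "real c / real k = 1 / (\<Prod>p\<in>P - T. real p)" using assms(6) by (simp add: of_nat_prod)
    also have "\<dots> = (\<Prod>p\<in>P - T. 1 / real p)" by (simp add: prod_dividef)
    also have "\<dots> = (\<Prod>p\<in>P. if p \<in> P - T then 1 / real p else 1)"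
      using finP by (intro prod_restrict) auto
    also have "\<dots> = (\<Prod>p\<in>P. if p \<in> T then 1 else 1 / real p)" by (intro prod.cong) auto
    finally show ?thesis .
  qed
  have ff: "f_fun \<alpha> (k div c) = (\<Prod>p\<in>P. if p \<in> T then 1 else
      (real p powr (2*\<alpha>-1) * (1 - 1/real p) powr (2*\<alpha>) + (1 - 1/real p)) /
      ((1/real p) * (1 - 1/real p) + (1 - 1/real p) powr (2 - 2*\<alpha>)))"
  proof -
    have "prime_factors (k div c) = P - T" unfolding kc using finP pr by (intro pf_prod) auto
    then have "f_fun \<alpha> (k div c) = (\<Prod>p\<in>P - T.
      (real p powr (2*\<alpha>-1) * (1 - 1/real p) powr (2*\<alpha>) + (1 - 1/real p)) /
      ((1/real p) * (1 - 1/real p) + (1 - 1/real p) powr (2 - 2*\<alpha>)))" by (simp add: f_fun_def)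
    also have "\<dots> = (\<Prod>p\<in>P. if p \<in> P - T then
      (real p powr (2*\<alpha>-1) * (1 - 1/real p) powr (2*\<alpha>) + (1 - 1/real p)) /
      ((1/real p) * (1 - 1/real p) + (1 - 1/real p) powr (2 - 2*\<alpha>)) else 1)"
      using finP by (intro prod_restrict) auto
    also have "\<dots> = (\<Prod>p\<in>P. if p \<in> T then 1 else
      (real p powr (2*\<alpha>-1) * (1 - 1/real p) powr (2*\<alpha>) + (1 - 1/real p)) /
      ((1/real p) * (1 - 1/real p) + (1 - 1/real p) powr (2 - 2*\<alpha>)))" by (intro prod.cong) auto
    finally show ?thesis .
  qed
  have I1: "(1 / (real k)^2) * (\<Sum>d\<in>{d. d dvd k}. G c d)
         = (\<Prod>p\<in>prime_factors k. (1/real p) * (1 - 1/real p) + (1 - 1/real p) powr (2 - 2*\<alpha>))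
           * (real c / real k) * f_fun \<alpha> (k div c)"
    unfolding cT sumd[OF TP] isq pfk
    unfolding cT[symmetric] ck ff prod.distrib[symmetric]
  proof (intro prod.cong[OF refl])
    fix p assume pP: "p \<in> P"
    have x1: "real p > 1" using pgt[OF pP] .
    show "1 / (real p)\<^sup>2 * (gl \<alpha> p (p \<in> T) True + gl \<alpha> p (p \<in> T) False) =
      ((1/real p) * (1 - 1/real p) + (1 - 1/real p) powr (2 - 2*\<alpha>)) *
      (if p \<in> T then 1 else 1 / real p) *
      (if p \<in> T then 1 else
      (real p powr (2*\<alpha>-1) * (1 - 1/real p) powr (2*\<alpha>) + (1 - 1/real p)) /
      ((1/real p) * (1 - 1/real p) + (1 - 1/real p) powr (2 - 2*\<alpha>)))"
    proof (cases "p \<in> T")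
      case True
      then show ?thesis using loc(1)[OF x1, of \<alpha>] by (simp add: gl_vals)
    next
      case False
      then show ?thesis using loc(2,3)[OF x1, of \<alpha>] by (simp add: gl_vals)
    qed
  qed
  have I2: "(1 / (real k)^2) * (\<Sum>c'\<in>{c'. c' dvd k}. \<Sum>d\<in>{d. d dvd k}. G c' d)
         = (\<Prod>p\<in>prime_factors k. real p powr (2*\<alpha> - 2) * (1 - 1/real p) powr (2*\<alpha>)
              + (2/real p) * (1 - 1/real p) + (1 - 1/real p) powr (2 - 2*\<alpha>))"
  proof -
    have "(\<Sum>c'\<in>{c'. c' dvd k}. \<Sum>d\<in>{d. d dvd k}. G c' d)
        = (\<Sum>T'\<in>Pow P. \<Sum>d\<in>{d. d dvd k}. G (\<Prod>T') d)"
      unfolding kP by (rule div_sum[OF finP pr])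
    also have "\<dots> = (\<Sum>T'\<in>Pow P. \<Prod>p\<in>P. gl \<alpha> p (p \<in> T') True + gl \<alpha> p (p \<in> T') False)"
      using sumd by (intro sum.cong) auto
    also have "\<dots> = (\<Prod>p\<in>P. (gl \<alpha> p True True + gl \<alpha> p True False) + (gl \<alpha> p False True + gl \<alpha> p False False))"
      by (rule sum_pow_prod[OF finP, of "\<lambda>p t. gl \<alpha> p t True + gl \<alpha> p t False"])
    finally have S2: "(\<Sum>c'\<in>{c'. c' dvd k}. \<Sum>d\<in>{d. d dvd k}. G c' d) = \<dots>" .
    show ?thesis unfolding isq pfk S2 prod.distrib[symmetric]
    proof (intro prod.cong[OF refl])
      fix p assume pP: "p \<in> P"
      show "1 / (real p)\<^sup>2 * ((gl \<alpha> p True True + gl \<alpha> p True False) + (gl \<alpha> p False True + gl \<alpha> p False False)) =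
        real p powr (2*\<alpha> - 2) * (1 - 1/real p) powr (2*\<alpha>)
              + (2/real p) * (1 - 1/real p) + (1 - 1/real p) powr (2 - 2*\<alpha>)"
        using loc(4)[OF pgt[OF pP], of \<alpha>] by (simp add: gl_vals)
    qed
  qed
  show ?thesis using I1 I2 unfolding G_def by blast
qed

end
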